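(* In the multi-user imperfect-prediction setting below, let $\phi_I^*=\min_{\lambda\ge0}g_I(\lambda)$ and $\phi_0^*=\min_{\lambda\ge0}g_0(\lambda)$, let $\lambda_0^*$ be a minimizer of $g_0^l$ and $\lambda_I^*$ a minimizer of $g_I^l$ over $\lambda\ge0$. Then $$g_I^l(\lambda_I^* )-g_0^u(\lambda_I^* )\le\phi_I^*-\phi_0^*\le g_I^u(\lambda_0^* )-g_0^l(\lambda_0^* ).$$
   Context: $N$ users; $B>0$; $a_{\max}>0$. User $n$ has arrival rate $a_n\ge0$, true-positive rate $p_n$ and false-negative rate $q_n$ with $0\le q_n<p_n\le1$ and $q_n\le a_n/a_{\max}\le p_n$, $\tilde a_n=\frac{a_n-a_{\max}q_n}{p_n-q_n}$, a probability vector $\boldsymbol\eta_n$ on its channel states, $\beta_n\ge0$, integers $\tau_n\ge1$, $D_n\ge1$, a Markov channel on $\{1,\dots,K_n\}$ with transition matrix $(P_n^{i,j})$, a finite $\mathcal E\subset[0,\infty)$ containing $0$ and a positive element, and $\zeta_n(i,\cdot):\mathcal E\to[0,1]$ with $\zeta_n(i,0)=0$, $\zeta_n(i,e)>0$ for $e>0$, strictly increasing; states totally ordered by $\zeta_n$ (for all $i,j$ either $\zeta_n(i,e)\ge\zeta_n(j,e)\ \forall e$ or $\le\ \forall e$) with extremal states $i_n^{\max},i_n^{\min}$. For $\lambda\ge0$ (all functions depend on $\lambda$; maxima over $e\in\mathcal E$): $V_n^l(0)=0$, $V_n^l(\tau)=\max_{e>0}\frac{1-[1-\zeta_n(i_n^{\min},e)]^{\tau}}{\zeta_n(i_n^{\min},e)}[-\lambda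 e+\zeta_n(i_n^{\min},e)\beta_n]$; $V_n^u(0)=0$, $V_n^u(\tau)=\sum_{z=1}^{\tau}\max_{e}\{-\lambda e+\zeta_n(i_n^{\max},e)(\beta_n-\max\{0,V_n^l(z-1)\})\}$; for $\tau_n\le\tau\le\tau_n+D_n$, $\tilde V_n^l(\tau)=\max_{e>0}\{-(1-p_n)\frac{1-[1-\zeta_n(i_n^{\min},e)]^{\tau-\tau_n}}{\zeta_n(i_n^{\min},e)}\lambda e+p_n\frac{1-[1-\zeta_n(i_n^{\min},e)]^{\tau}}{\zeta_n(i_n^{\min},e)}[-\lambda e+\zeta_n(i_n^{\min},e)\beta_n]\}$ and $\tilde V_n^u(\tau)=\sum_{z=\tau_n+1}^{\tau}\max_e\{-\lambda e+\zeta_n(i_n^{\max},e)(p_n\beta_n-\max\{0,\tilde V_n^l(\tau_n),\tilde V_n^l(z-1)\})\}+p_n\sum_{z=1}^{\tau_n}\max_e\{-\lambda e+\zeta_n(i_n^{\max},e)(\beta_n-\max\{0,V_n^l(z-1)\})\}$. The imperfect-prediction value function: $V_n^I(0,0,i)=0$; $V_n^I(0,\tau,i)=\max_e\{-\lambda e+\zeta_n(i,e)\beta_n+(1-\zeta_n(i,e))\sum_jP_n^{i,j}V_n^I(0,\tau-1,j)\}$ for $1\le\tau\le\tau_n$; $V_n^I(0,\tau_n+1,i)=\max_e\{-\lambda e+\zeta_n(i,e)p_n\beta_n+p_n(1-\zeta_n(i,e))\sum_jP_n^{i,j}V_n^I(0,\tau_n,j)\}$; $V_n^I(0,\tau,i)=\max_e\{-\lambda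 e+\zeta_n(i,e)p_n\beta_n+(1-\zeta_n(i,e))\sum_jP_n^{i,j}V_n^I(0,\tau-1,j)\}$ for $\tau_n+2\le\tau\le\tau_n+D_n$. Define $g_I(\lambda)=\lambda B+\sum_n[\tilde a_n\sum_i\eta_n^iV_n^I(0,\tau_n+D_n,i)+(a_{\max}-\tilde a_n)q_n\sum_i\eta_n^iV_n^I(0,\tau_n,i)]$, $g_I^u(\lambda)=\lambda B+\sum_n\{\tilde a_n\min[p_n\beta_n,\tilde V_n^u(\tau_n+D_n)]+(a_{\max}-\tilde a_n)q_n\min[\beta_n,V_n^u(\tau_n)]\}$, $g_I^l(\lambda)=\lambda B+\sum_n\{\tilde a_n\max[0,\tilde V_n^l(\tau_n),\tilde V_n^l(\tau_n+D_n)]+(a_{\max}-\tilde a_n)q_n\max[0,V_n^l(\tau_n)]\}$. No-prediction functions: $g_0(\lambda)=\lambda B+\sum_n a_n\sum_i\eta_n^iV_n^I(0,\tau_n,i)$, $g_0^u(\lambda)=\lambda B+\sum_n a_n\min\{\beta_n,V_n^u(\tau_n)\}$, $g_0^l(\lambda)=\lambda B+\sum_n a_n\max\{0,V_n^l(\tau_n)\}$. $g_I$, $g_0$ are the Lagrange dual functions with imperfect prediction and without prediction; $\phi_I^*,\phi_0^*$ the optimal weighted timely-throughputs. *)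

theory Defs
  imports Complex_Main
begin

text \<open>Parameters of the multi-user system. Users are indexed by n < num_users;
  channel states of user n are 1..nstates n.\<close>

record system =
  num_users :: nat
  budget :: real
  a_max :: real
  arrival :: "nat \<Rightarrow> real"
  p_tp :: "nat \<Rightarrow> real"
  q_fn :: "nat \<Rightarrow> real"
  eta :: "nat \<Rightarrow> nat \<Rightarrow> real"
  beta :: "nat \<Rightarrow> real"
  tau :: "nat \<Rightarrow> nat"
  delay :: "nat \<Rightarrow> nat"
  nstates :: "nat \<Rightarrow> nat"
  trans :: "nat \<Rightarrow> nat \<Rightarrow> nat \<Rightarrow> real"
  energies :: "real set"
  zeta :: "nat \<Rightarrow> nat \<Rightarrow> real \<Rightarrow> real"
  i_max :: "nat \<Rightarrow> nat"
  i_min :: "nat \<Rightarrow> nat"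

definition valid_system :: "system \<Rightarrow> bool" where
  "valid_system S \<longleftrightarrow>
     budget S > 0 \<and> a_max S > 0 \<and>
     finite (energies S) \<and> energies S \<subseteq> {0..} \<and> 0 \<in> energies S \<and>
     (\<exists>e\<in>energies S. e > 0) \<and>
     (\<forall>n < num_users S.
        arrival S n \<ge> 0 \<and>
        0 \<le> q_fn S n \<and> q_fn S n < p_tp S n \<and> p_tp S n \<le> 1 \<and>
        q_fn S n \<le> arrival S n / a_max S \<and> arrival S n / a_max S \<le> p_tp S n \<and>
        beta S n \<ge> 0 \<and> tau S n \<ge> 1 \<and> delay S n \<ge> 1 \<and> nstates S n \<ge> 1 \<and>
        (\<forall>i\<in>{1..nstates S n}. eta S n i \<ge> 0) \<and>
        (\<Sum>i\<in>{1..nstates S n}. eta S n i) = 1 \<and>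
        (\<forall>i\<in>{1..nstates S n}. \<forall>j\<in>{1..nstates S n}. trans S n i j \<ge> 0) \<and>
        (\<forall>i\<in>{1..nstates S n}. (\<Sum>j\<in>{1..nstates S n}. trans S n i j) = 1) \<and>
        (\<forall>i\<in>{1..nstates S n}.
           zeta S n i 0 = 0 \<and>
           (\<forall>e\<in>energies S. 0 \<le> zeta S n i e \<and> zeta S n i e \<le> 1) \<and>
           (\<forall>e\<in>energies S. e > 0 \<longrightarrow> zeta S n i e > 0) \<and>
           (\<forall>e\<in>energies S. \<forall>e'\<in>energies S. e < e' \<longrightarrow> zeta S n i e < zeta S n i e')) \<and>
        (\<forall>i\<in>{1..nstates S n}. \<forall>j\<in>{1..nstates S n}.
           (\<forall>e\<in>energies S. zeta S n i e \<ge> zeta S n j e) \<or>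
           (\<forall>e\<in>energies S. zeta S n i e \<le> zeta S n j e)) \<and>
        i_max S n \<in> {1..nstates S n} \<and> i_min S n \<in> {1..nstates S n} \<and>
        (\<forall>j\<in>{1..nstates S n}. \<forall>e\<in>energies S.
           zeta S n (i_min S n) e \<le> zeta S n j e \<and> zeta S n j e \<le> zeta S n (i_max S n) e))"

definition a_tilde :: "system \<Rightarrow> nat \<Rightarrow> real" where
  "a_tilde S n = (arrival S n - a_max S * q_fn S n) / (p_tp S n - q_fn S n)"

definition Vl :: "system \<Rightarrow> nat \<Rightarrow> real \<Rightarrow> nat \<Rightarrow> real" where
  "Vl S n lam t = (if t = 0 then 0 else
     Max ((\<lambda>e. let z = zeta S n (i_min S n) e in
             (1 - (1 - z) ^ t) / z * (- lam * e + z * beta S n))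
          ` {e\<in>energies S. e > 0}))"

definition Vu :: "system \<Rightarrow> nat \<Rightarrow> real \<Rightarrow> nat \<Rightarrow> real" where
  "Vu S n lam t = (\<Sum>z\<in>{1..t}.
     Max ((\<lambda>e. - lam * e + zeta S n (i_max S n) e *
             (beta S n - max 0 (Vl S n lam (z - 1)))) ` energies S))"

text \<open>tilde V^l_n(tau), meaningful for tau_n <= tau <= tau_n + D_n.\<close>
definition tVl :: "system \<Rightarrow> nat \<Rightarrow> real \<Rightarrow> nat \<Rightarrow> real" where
  "tVl S n lam t =
     Max ((\<lambda>e. let z = zeta S n (i_min S n) e in
             - (1 - p_tp S n) * ((1 - (1 - z) ^ (t - tau S n)) / z) * lam * e
             + p_tp S n * ((1 - (1 - z) ^ t) / z) * (- lam * e + z * beta S n))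
          ` {e\<in>energies S. e > 0})"

definition tVu :: "system \<Rightarrow> nat \<Rightarrow> real \<Rightarrow> nat \<Rightarrow> real" where
  "tVu S n lam t =
     (\<Sum>z\<in>{tau S n + 1..t}.
        Max ((\<lambda>e. - lam * e + zeta S n (i_max S n) e *
                (p_tp S n * beta S n -
                 max 0 (max (tVl S n lam (tau S n)) (tVl S n lam (z - 1))))) ` energies S))
     + p_tp S n * (\<Sum>z\<in>{1..tau S n}.
        Max ((\<lambda>e. - lam * e + zeta S n (i_max S n) e *
                (beta S n - max 0 (Vl S n lam (z - 1)))) ` energies S))"

text \<open>Imperfect-prediction value function V^I_n(0, tau, i). For tau > tau_n + D_n
  (never used) the last recursion is simply continued.\<close>
fun VI :: "system \<Rightarrow> nat \<Rightarrow> real \<Rightarrow> nat \<Rightarrow> nat \<Rightarrow> real" where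
  "VI S n lam 0 i = 0"
| "VI S n lam (Suc t) i =
     (let Sm = (\<Sum>j\<in>{1..nstates S n}. trans S n i j * VI S n lam t j) in
      Max ((\<lambda>e. let z = zeta S n i e in
        - lam * e +
        (if Suc t \<le> tau S n then z * beta S n + (1 - z) * Sm
         else if Suc t = tau S n + 1 then z * p_tp S n * beta S n + p_tp S n * (1 - z) * Sm
         else z * p_tp S n * beta S n + (1 - z) * Sm)) ` energies S))"

definition gI :: "system \<Rightarrow> real \<Rightarrow> real" where
  "gI S lam = lam * budget S + (\<Sum>n<num_users S.
     a_tilde S n * (\<Sum>i\<in>{1..nstates S n}. eta S n i * VI S n lam (tau S n + delay S n) i)
     + (a_max S - a_tilde S n) * q_fn S n *
       (\<Sum>i\<in>{1..nstates S n}. eta S n i * VI S n lam (tau S n) i))"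

definition gI_u :: "system \<Rightarrow> real \<Rightarrow> real" where
  "gI_u S lam = lam * budget S + (\<Sum>n<num_users S.
     a_tilde S n * min (p_tp S n * beta S n) (tVu S n lam (tau S n + delay S n))
     + (a_max S - a_tilde S n) * q_fn S n * min (beta S n) (Vu S n lam (tau S n)))"

definition gI_l :: "system \<Rightarrow> real \<Rightarrow> real" where
  "gI_l S lam = lam * budget S + (\<Sum>n<num_users S.
     a_tilde S n * max 0 (max (tVl S n lam (tau S n)) (tVl S n lam (tau S n + delay S n)))
     + (a_max S - a_tilde S n) * q_fn S n * max 0 (Vl S n lam (tau S n)))"

definition g0 :: "system \<Rightarrow> real \<Rightarrow> real" where
  "g0 S lam = lam * budget S + (\<Sum>n<num_users S.
     arrival S n * (\<Sum>i\<in>{1..nstates S n}. eta S n i * VI S n lam (tau S n) i))"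

definition g0_u :: "system \<Rightarrow> real \<Rightarrow> real" where
  "g0_u S lam = lam * budget S + (\<Sum>n<num_users S.
     arrival S n * min (beta S n) (Vu S n lam (tau S n)))"

definition g0_l :: "system \<Rightarrow> real \<Rightarrow> real" where
  "g0_l S lam = lam * budget S + (\<Sum>n<num_users S.
     arrival S n * max 0 (Vl S n lam (tau S n)))"

end

theory Submission
  imports Defs
begin


definition Bf :: "system \<Rightarrow> nat \<Rightarrow> real \<Rightarrow> real \<Rightarrow> real \<Rightarrow> nat \<Rightarrow> real \<Rightarrow> real" where
"Bf S n lam e z t W = - lam * e + (if t \<le> tau S n then z * beta S n + (1 - z) * W
   else if t = tau S n + 1 then z * p_tp S n * beta S n + p_tp S n * (1 - z) * W
   else z * p_tp S n * beta S n + (1 - z) * W)"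

lemma VI_Suc: "VI S n lam (Suc t) i = Max ((\<lambda>e. Bf S n lam e (zeta S n i e) (Suc t)
   (\<Sum>j\<in>{1..nstates S n}. trans S n i j * VI S n lam t j)) ` energies S)"
  by (simp add: Bf_def Let_def)

fun Wr :: "system \<Rightarrow> nat \<Rightarrow> real \<Rightarrow> real \<Rightarrow> real \<Rightarrow> nat \<Rightarrow> real" where
  "Wr S n lam e z 0 = 0"
| "Wr S n lam e z (Suc t) = Bf S n lam e z (Suc t) (Wr S n lam e z t)"

definition cap :: "system \<Rightarrow> nat \<Rightarrow> nat \<Rightarrow> real" where
  "cap S n t = (if t \<le> tau S n then beta S n else p_tp S n * beta S n)"

lemma Bf_mono_W:
  assumes "0 \<le> z" "z \<le> 1" "0 \<le> p_tp S n" "W \<le> W'"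
  shows "Bf S n lam e z t W \<le> Bf S n lam e z t W'"
proof -
  have a: "(1 - z) * W \<le> (1 - z) * W'" using assms by (intro mult_left_mono) auto
  have b: "p_tp S n * ((1 - z) * W) \<le> p_tp S n * ((1 - z) * W')" using a assms by (intro mult_left_mono) auto
  show ?thesis using a b unfolding Bf_def by (auto simp: algebra_simps)
qed

lemma Bf_mono_z:
  assumes "z \<le> z'" "W \<le> cap S n t" "0 \<le> p_tp S n" "p_tp S n \<le> 1" "0 \<le> beta S n"
  shows "Bf S n lam e z (Suc t) W \<le> Bf S n lam e z' (Suc t) W"
proof -
  have e1: "Bf S n lam e z (Suc t) W = - lam * e + (if Suc t \<le> tau S n then W + z * (beta S n - W)
   else if Suc t = tau S n + 1 then p_tp S n * W + z * (p_tp S n * beta S n - p_tp S n * W)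
   else W + z * (p_tp S n * beta S n - W))" for z
    unfolding Bf_def by (auto simp: algebra_simps)
  consider "Suc t \<le> tau S n" | "Suc t = tau S n + 1" | "Suc t > tau S n + 1" by linarith
  then show ?thesis
  proof cases
    case 1
    then have "W \<le> beta S n" using assms(2) by (simp add: cap_def)
    then have "z * (beta S n - W) \<le> z' * (beta S n - W)" using assms by (intro mult_right_mono) auto
    then show ?thesis unfolding e1 using 1 by simp
  next
    case 2
    then have "W \<le> beta S n" using assms(2) by (simp add: cap_def)
    then have "p_tp S n * W \<le> p_tp S n * beta S n" using assms by (intro mult_left_mono) auto
    then have "z * (p_tp S n * beta S n - p_tp S n * W) \<le> z' * (p_tp S n * beta S n - p_tp S n * W)" using assms by (intro mult_right_mono) auto
    then show ?thesis unfolding e1 using 2 by simp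
  next
    case 3
    then have "W \<le> p_tp S n * beta S n" using assms(2) by (simp add: cap_def)
    then have "z * (p_tp S n * beta S n - W) \<le> z' * (p_tp S n * beta S n - W)" using assms by (intro mult_right_mono) auto
    then show ?thesis unfolding e1 using 3 by simp
  qed
qed

lemma Bf_cap:
  assumes "0 \<le> z" "z \<le> 1" "W \<le> cap S n t" "0 \<le> p_tp S n" "p_tp S n \<le> 1" "0 \<le> beta S n" "0 \<le> lam * e"
  shows "Bf S n lam e z (Suc t) W \<le> cap S n (Suc t)"
proof -
  consider "Suc t \<le> tau S n" | "Suc t = tau S n + 1" | "Suc t > tau S n + 1" by linarith
  then show ?thesis
  proof cases
    case 1
    then have "W \<le> beta S n" using assms(3) by (simp add: cap_def)
    moreover have "(1 - z) * W \<le> (1 - z) * beta S n" using assms calculation by (intro mult_left_mono) auto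
    ultimately show ?thesis using 1 assms unfolding Bf_def cap_def by (auto simp: algebra_simps)
  next
    case 2
    then have wb: "W \<le> beta S n" using assms(3) by (simp add: cap_def)
    then have "(1 - z) * W \<le> (1 - z) * beta S n" using assms by (intro mult_left_mono) auto
    then have "p_tp S n * ((1 - z) * W) \<le> p_tp S n * ((1 - z) * beta S n)" using assms wb by (intro mult_left_mono) auto
    then show ?thesis using 2 assms unfolding Bf_def cap_def by (auto simp: algebra_simps)
  next
    case 3
    then have "W \<le> p_tp S n * beta S n" using assms(3) by (simp add: cap_def)
    then have "(1 - z) * W \<le> (1 - z) * (p_tp S n * beta S n)" using assms by (intro mult_left_mono) auto
    then show ?thesis using 3 assms unfolding Bf_def cap_def by (auto simp: algebra_simps)
  qed
qed

lemma CF1: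
  assumes "z \<noteq> 0"
  shows "t \<le> tau S n \<Longrightarrow> Wr S n lam e z t = (1 - (1 - z) ^ t) / z * (- lam * e + z * beta S n)"
proof (induction t)
  case 0 then show ?case by simp
next
  case (Suc t)
  then have "Wr S n lam e z (Suc t) = - lam * e + z * beta S n + (1 - z) * ((1 - (1 - z) ^ t) / z * (- lam * e + z * beta S n))"
    by (simp add: Bf_def)
  also have "\<dots> = (1 - (1 - z) ^ Suc t) / z * (- lam * e + z * beta S n)"
    using assms by (simp add: field_simps)
  finally show ?case .
qed

lemma CF2:
  assumes "z \<noteq> 0"
  shows "Wr S n lam e z (tau S n + Suc k) = - (1 - p_tp S n) * ((1 - (1 - z) ^ Suc k) / z) * lam * e
      + p_tp S n * ((1 - (1 - z) ^ (tau S n + Suc k)) / z) * (- lam * e + z * beta S n)"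
proof (induction k)
  case 0
  have w: "Wr S n lam e z (tau S n) = (1 - (1 - z) ^ tau S n) / z * (- lam * e + z * beta S n)"
    using CF1[OF assms] by simp
  have "Wr S n lam e z (tau S n + Suc 0) = - lam * e + (z * p_tp S n * beta S n + p_tp S n * (1 - z) * Wr S n lam e z (tau S n))"
    by (simp add: Bf_def)
  then show ?case using assms unfolding w by (simp add: field_simps)
next
  case (Suc k)
  have "Wr S n lam e z (tau S n + Suc (Suc k)) = - lam * e + (z * p_tp S n * beta S n + (1 - z) * Wr S n lam e z (tau S n + Suc k))"
    by (simp add: Bf_def)
  then show ?case using assms unfolding Suc by (simp add: field_simps)
qed



lemma MaxI_le: "finite A \<Longrightarrow> A \<noteq> {} \<Longrightarrow> (\<And>e. e\<in>A \<Longrightarrow> f e \<le> x) \<Longrightarrow> Max (f ` A) \<le> (x::real)"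
  by (subst Max_le_iff) auto

lemma MaxI_ge: "finite A \<Longrightarrow> e\<in>A \<Longrightarrow> y \<le> f e \<Longrightarrow> y \<le> Max (f ` (A::'a set)) \<and> True"
  by (meson Max_ge finite_imageI image_eqI order_trans)

lemma avg_ge:
  assumes "finite A" "\<forall>j\<in>A. 0 \<le> w j" "sum w A = 1" "\<forall>j\<in>A. L \<le> x j"
  shows "L \<le> (\<Sum>j\<in>A. w j * (x j::real))"
proof -
  have "(\<Sum>j\<in>A. w j * L) \<le> (\<Sum>j\<in>A. w j * x j)"
    using assms by (intro sum_mono mult_left_mono) auto
  moreover have "(\<Sum>j\<in>A. w j * L) = L" using assms(3) by (simp add: sum_distrib_right[symmetric])
  ultimately show ?thesis by simp
qed

lemma avg_le:
  assumes "finite A" "\<forall>j\<in>A. 0 \<le> w j" "sum w A = 1" "\<forall>j\<in>A. x j \<le> L"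
  shows "(\<Sum>j\<in>A. w j * (x j::real)) \<le> L"
proof -
  have "(\<Sum>j\<in>A. w j * x j) \<le> (\<Sum>j\<in>A. w j * L)"
    using assms by (intro sum_mono mult_left_mono) auto
  moreover have "(\<Sum>j\<in>A. w j * L) = L" using assms(3) by (simp add: sum_distrib_right[symmetric])
  ultimately show ?thesis by simp
qed

lemma key_ineq:
  fixes zi zM M Sm X :: real
  assumes "0 \<le> zi" "zi \<le> zM" "M \<le> Sm" "M \<le> X"
  shows "zi * (X - Sm) \<le> zM * (X - M)"
proof -
  have "zi * (X - Sm) \<le> zi * (X - M)" using assms by (intro mult_left_mono) auto
  also have "\<dots> \<le> zM * (X - M)" using assms by (intro mult_right_mono) auto
  finally show ?thesis .
qed

lemma Wr_zero: "Wr S n lam 0 0 t = 0"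
  by (induction t) (auto simp: Bf_def)

context
  fixes S :: system and n :: nat and lam :: real
  assumes V: "valid_system S" and nU: "n < num_users S" and lam: "0 \<le> lam"
begin

lemma U: "budget S > 0 \<and> a_max S > 0 \<and>
     finite (energies S) \<and> energies S \<subseteq> {0..} \<and> 0 \<in> energies S \<and>
     (\<exists>e\<in>energies S. e > 0) \<and>
        arrival S n \<ge> 0 \<and>
        0 \<le> q_fn S n \<and> q_fn S n < p_tp S n \<and> p_tp S n \<le> 1 \<and>
        q_fn S n \<le> arrival S n / a_max S \<and> arrival S n / a_max S \<le> p_tp S n \<and>
        beta S n \<ge> 0 \<and> tau S n \<ge> 1 \<and> delay S n \<ge> 1 \<and> nstates S n \<ge> 1 \<and>
        (\<forall>i\<in>{1..nstates S n}. eta S n i \<ge> 0) \<and>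
        (\<Sum>i\<in>{1..nstates S n}. eta S n i) = 1 \<and>
        (\<forall>i\<in>{1..nstates S n}. \<forall>j\<in>{1..nstates S n}. trans S n i j \<ge> 0) \<and>
        (\<forall>i\<in>{1..nstates S n}. (\<Sum>j\<in>{1..nstates S n}. trans S n i j) = 1) \<and>
        (\<forall>i\<in>{1..nstates S n}.
           zeta S n i 0 = 0 \<and>
           (\<forall>e\<in>energies S. 0 \<le> zeta S n i e \<and> zeta S n i e \<le> 1) \<and>
           (\<forall>e\<in>energies S. e > 0 \<longrightarrow> zeta S n i e > 0)) \<and>
        i_max S n \<in> {1..nstates S n} \<and> i_min S n \<in> {1..nstates S n} \<and>
        (\<forall>j\<in>{1..nstates S n}. \<forall>e\<in>energies S.
           zeta S n (i_min S n) e \<le> zeta S n j e \<and> zeta S n j e \<le> zeta S n (i_max S n) e)"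
  using V nU unfolding valid_system_def by blast

lemma finE: "finite (energies S)" and zE: "0 \<in> energies S" and nnE: "e \<in> energies S \<Longrightarrow> 0 \<le> e"
  using U by auto

lemma Epos: "finite {e\<in>energies S. e>0}" "{e\<in>energies S. e>0} \<noteq> {}"
  using U by auto

lemma pp: "0 \<le> p_tp S n" "p_tp S n \<le> 1" "0 \<le> beta S n" "1 \<le> tau S n" "1 \<le> delay S n"
  "0 \<le> q_fn S n" "q_fn S n < p_tp S n" "0 \<le> arrival S n" "0 < a_max S"
  "q_fn S n \<le> arrival S n / a_max S" "arrival S n / a_max S \<le> p_tp S n"
  using U by auto

lemma zb: "i \<in> {1..nstates S n} \<Longrightarrow> e \<in> energies S \<Longrightarrow> 0 \<le> zeta S n i e \<and> zeta S n i e \<le> 1"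
  and z0: "i \<in> {1..nstates S n} \<Longrightarrow> zeta S n i 0 = 0"
  and zpos: "i \<in> {1..nstates S n} \<Longrightarrow> e \<in> energies S \<Longrightarrow> 0 < e \<Longrightarrow> 0 < zeta S n i e"
  and zmm: "j \<in> {1..nstates S n} \<Longrightarrow> e \<in> energies S \<Longrightarrow>
      zeta S n (i_min S n) e \<le> zeta S n j e \<and> zeta S n j e \<le> zeta S n (i_max S n) e"
  and iR: "i_min S n \<in> {1..nstates S n}" "i_max S n \<in> {1..nstates S n}"
  using U by auto

lemma tr: "i \<in> {1..nstates S n} \<Longrightarrow> \<forall>j\<in>{1..nstates S n}. 0 \<le> trans S n i j"
  "i \<in> {1..nstates S n} \<Longrightarrow> (\<Sum>j\<in>{1..nstates S n}. trans S n i j) = 1"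
  and et: "\<forall>i\<in>{1..nstates S n}. 0 \<le> eta S n i" "(\<Sum>i\<in>{1..nstates S n}. eta S n i) = 1"
  using U by auto

lemma Wr_cap: "e \<in> energies S \<Longrightarrow> 0 \<le> z \<Longrightarrow> z \<le> 1 \<Longrightarrow> Wr S n lam e z t \<le> cap S n t"
proof (induction t)
  case 0 then show ?case using pp by (simp add: cap_def)
next
  case (Suc t) then show ?case using pp lam nnE[of e] by (simp add: Bf_cap)
qed

lemma VI_cap: "i \<in> {1..nstates S n} \<Longrightarrow> VI S n lam t i \<le> cap S n t"
proof (induction t arbitrary: i)
  case 0 then show ?case using pp by (simp add: cap_def)
next
  case (Suc t)
  have sm: "(\<Sum>j\<in>{1..nstates S n}. trans S n i j * VI S n lam t j) \<le> cap S n t"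
    using Suc by (intro avg_le tr) auto
  show ?case unfolding VI_Suc
    apply (rule MaxI_le)
    using finE zE sm pp lam nnE zb[OF Suc.prems] by (auto intro!: Bf_cap)
qed

lemma low: "e \<in> energies S \<Longrightarrow> i \<in> {1..nstates S n} \<Longrightarrow>
   Wr S n lam e (zeta S n (i_min S n) e) t \<le> VI S n lam t i"
proof (induction t arbitrary: i)
  case 0 then show ?case by simp
next
  case (Suc t)
  let ?zm = "zeta S n (i_min S n) e"
  let ?Sm = "\<Sum>j\<in>{1..nstates S n}. trans S n i j * VI S n lam t j"
  have sm: "Wr S n lam e ?zm t \<le> ?Sm"
    using Suc by (intro avg_ge tr) auto
  have c: "Wr S n lam e ?zm t \<le> cap S n t" using Wr_cap zb[OF iR(1) Suc.prems(1)] Suc.prems by auto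
  have "Wr S n lam e ?zm (Suc t) = Bf S n lam e ?zm (Suc t) (Wr S n lam e ?zm t)" by simp
  also have "\<dots> \<le> Bf S n lam e (zeta S n i e) (Suc t) (Wr S n lam e ?zm t)"
    using Bf_mono_z c pp zmm[OF Suc.prems(2,1)] by blast
  also have "\<dots> \<le> Bf S n lam e (zeta S n i e) (Suc t) ?Sm"
    using Bf_mono_W sm pp zb[OF Suc.prems(2,1)] by blast
  also have "\<dots> \<le> VI S n lam (Suc t) i" unfolding VI_Suc
    using MaxI_ge finE Suc.prems(1) by (metis (no_types, lifting) order_refl)
  finally show ?case .
qed

lemma VI_nonneg: "i \<in> {1..nstates S n} \<Longrightarrow> 0 \<le> VI S n lam t i"
  using low[OF zE, of i t] z0[OF iR(1)] Wr_zero by simp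

abbreviation "Ep \<equiv> {e\<in>energies S. e>0}"

lemma zmpos: "e \<in> Ep \<Longrightarrow> zeta S n (i_min S n) e \<noteq> 0"
  using zpos[OF iR(1)] by fastforce

lemma Vl_eq: "1 \<le> t \<Longrightarrow> t \<le> tau S n \<Longrightarrow>
  Vl S n lam t = Max ((\<lambda>e. Wr S n lam e (zeta S n (i_min S n) e) t) ` Ep)"
  unfolding Vl_def using CF1[OF zmpos] by (auto simp: Let_def intro!: arg_cong[where f=Max] image_cong)

lemma tVl_eq1: "tVl S n lam (tau S n) = Max ((\<lambda>e. p_tp S n * Wr S n lam e (zeta S n (i_min S n) e) (tau S n)) ` Ep)"
  unfolding tVl_def using CF1[OF zmpos] by (auto simp: Let_def intro!: arg_cong[where f=Max] image_cong)

lemma tVl_eq2: "tVl S n lam (tau S n + Suc k) = Max ((\<lambda>e. Wr S n lam e (zeta S n (i_min S n) e) (tau S n + Suc k)) ` Ep)"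
  unfolding tVl_def using CF2[OF zmpos] by (auto simp: Let_def intro!: arg_cong[where f=Max] image_cong)

lemma zmb: "e \<in> energies S \<Longrightarrow> 0 \<le> zeta S n (i_min S n) e \<and> zeta S n (i_min S n) e \<le> 1"
  using zb[OF iR(1)] by blast

lemma Vl_le_VI: assumes a: "t \<le> tau S n" "j \<in> {1..nstates S n}" shows "Vl S n lam t \<le> VI S n lam t j"
proof (cases "t = 0")
  case True then show ?thesis by (simp add: Vl_def)
next
  case False
  then have t1: "1 \<le> t" by simp
  show ?thesis unfolding Vl_eq[OF t1 a(1)]
  proof (intro MaxI_le Epos)
    fix e assume "e \<in> Ep"
    then show "Wr S n lam e (zeta S n (i_min S n) e) t \<le> VI S n lam t j" using low[of e j t] a by blast
  qed
qed

lemma Vl_le_beta: assumes a: "t \<le> tau S n" shows "Vl S n lam t \<le> beta S n"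
proof (cases "t = 0")
  case True then show ?thesis using pp by (simp add: Vl_def)
next
  case False
  then have t1: "1 \<le> t" by simp
  show ?thesis unfolding Vl_eq[OF t1 a(1)]
  proof (intro MaxI_le Epos)
    fix e assume "e \<in> Ep"
    then show "Wr S n lam e (zeta S n (i_min S n) e) t \<le> beta S n"
      using Wr_cap[of e "zeta S n (i_min S n) e" t] zmb[of e] a by (auto simp: cap_def)
  qed
qed

lemma tVl1_le: "tVl S n lam (tau S n) \<le> p_tp S n * beta S n"
  unfolding tVl_eq1
proof (intro MaxI_le Epos)
  fix e assume "e \<in> Ep"
  then have "Wr S n lam e (zeta S n (i_min S n) e) (tau S n) \<le> beta S n"
    using Wr_cap[of e "zeta S n (i_min S n) e" "tau S n"] zmb[of e] by (auto simp: cap_def)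
  then show "p_tp S n * Wr S n lam e (zeta S n (i_min S n) e) (tau S n) \<le> p_tp S n * beta S n"
    using pp by (intro mult_left_mono) auto
qed

lemma tVl2_le: "tVl S n lam (tau S n + Suc k) \<le> p_tp S n * beta S n"
  unfolding tVl_eq2
proof (intro MaxI_le Epos)
  fix e assume "e \<in> Ep"
  then show "Wr S n lam e (zeta S n (i_min S n) e) (tau S n + Suc k) \<le> p_tp S n * beta S n"
    using Wr_cap[of e "zeta S n (i_min S n) e" "tau S n + Suc k"] zmb[of e] by (auto simp: cap_def)
qed

lemma post: "\<forall>j\<in>{1..nstates S n}. X \<le> VI S n lam (tau S n) j \<Longrightarrow> j \<in> {1..nstates S n} \<Longrightarrow>
   p_tp S n * X \<le> VI S n lam (tau S n + Suc k) j"
proof (induction k arbitrary: j)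
  case 0
  let ?Sm = "\<Sum>i\<in>{1..nstates S n}. trans S n j i * VI S n lam (tau S n) i"
  have "X \<le> ?Sm" using 0 by (intro avg_ge tr) auto
  then have "p_tp S n * X \<le> p_tp S n * ?Sm" using pp by (intro mult_left_mono) auto
  also have "\<dots> = Bf S n lam 0 (zeta S n j 0) (Suc (tau S n)) ?Sm"
    using z0[OF 0(2)] by (simp add: Bf_def)
  also have "\<dots> \<le> VI S n lam (tau S n + Suc 0) j"
    using VI_Suc[of S n lam "tau S n" j] MaxI_ge finE zE by (metis (no_types, lifting) add_Suc_right add_0_right order_refl)
  finally show ?case .
next
  case (Suc k)
  let ?Sm = "\<Sum>i\<in>{1..nstates S n}. trans S n j i * VI S n lam (tau S n + Suc k) i"
  have "p_tp S n * X \<le> ?Sm" using Suc by (intro avg_ge tr) auto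
  also have "\<dots> = Bf S n lam 0 (zeta S n j 0) (Suc (tau S n + Suc k)) ?Sm"
    using z0[OF Suc(3)] by (simp add: Bf_def)
  also have "\<dots> \<le> VI S n lam (tau S n + Suc (Suc k)) j"
    using VI_Suc[of S n lam "tau S n + Suc k" j] MaxI_ge finE zE by (metis (no_types, lifting) add_Suc_right order_refl)
  finally show ?case .
qed

lemma tVl1_le_VI: "j \<in> {1..nstates S n} \<Longrightarrow> tVl S n lam (tau S n) \<le> VI S n lam (tau S n + Suc k) j"
  unfolding tVl_eq1
proof (intro MaxI_le Epos)
  fix e assume "e \<in> Ep" "j \<in> {1..nstates S n}"
  then show "p_tp S n * Wr S n lam e (zeta S n (i_min S n) e) (tau S n) \<le> VI S n lam (tau S n + Suc k) j"
    using post low by auto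
qed

lemma tVl2_le_VI: "j \<in> {1..nstates S n} \<Longrightarrow> tVl S n lam (tau S n + Suc k) \<le> VI S n lam (tau S n + Suc k) j"
  unfolding tVl_eq2
proof (intro MaxI_le Epos)
  fix e assume "e \<in> Ep" "j \<in> {1..nstates S n}"
  then show "Wr S n lam e (zeta S n (i_min S n) e) (tau S n + Suc k) \<le> VI S n lam (tau S n + Suc k) j"
    using low[of e j "tau S n + Suc k"] by blast
qed

lemma Vu_Suc: "Vu S n lam (Suc t) = Vu S n lam t + Max ((\<lambda>e. - lam * e + zeta S n (i_max S n) e *
             (beta S n - max 0 (Vl S n lam t))) ` energies S)"
  unfolding Vu_def by simp

lemma Vu_ge: "t \<le> tau S n \<Longrightarrow> i \<in> {1..nstates S n} \<Longrightarrow> VI S n lam t i \<le> Vu S n lam t"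
proof (induction t arbitrary: i)
  case 0 then show ?case by (simp add: Vu_def)
next
  case (Suc t)
  let ?Sm = "\<Sum>j\<in>{1..nstates S n}. trans S n i j * VI S n lam t j"
  let ?M = "max 0 (Vl S n lam t)"
  have smu: "?Sm \<le> Vu S n lam t" using Suc by (intro avg_le tr) auto
  have sml: "?M \<le> ?Sm" using Suc VI_nonneg Vl_le_VI by (intro avg_ge tr) auto
  have mb: "?M \<le> beta S n" using pp Vl_le_beta Suc by auto
  show ?case unfolding VI_Suc Vu_Suc
  proof (intro MaxI_le finE)
    show "energies S \<noteq> {}" using zE by auto
    fix e assume e: "e \<in> energies S"
    have "Bf S n lam e (zeta S n i e) (Suc t) ?Sm = - lam * e + zeta S n i e * (beta S n - ?Sm) + ?Sm"
      using Suc.prems by (simp add: Bf_def algebra_simps)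
    also have "\<dots> \<le> - lam * e + zeta S n (i_max S n) e * (beta S n - ?M) + Vu S n lam t"
      using key_ineq[of "zeta S n i e" "zeta S n (i_max S n) e" ?M ?Sm "beta S n"] smu sml mb
        zb[OF Suc.prems(2) e] zmm[OF Suc.prems(2) e] by linarith
    also have "\<dots> \<le> Vu S n lam t + Max ((\<lambda>e. - lam * e + zeta S n (i_max S n) e *
             (beta S n - ?M)) ` energies S)"
      using MaxI_ge[OF finE e, of "- lam * e + zeta S n (i_max S n) e * (beta S n - ?M)"] by simp
    finally show "Bf S n lam e (zeta S n i e) (Suc t) ?Sm \<le> Vu S n lam t + Max ((\<lambda>e. - lam * e + zeta S n (i_max S n) e *
             (beta S n - ?M)) ` energies S)" .
  qed
qed

definition "Tq s = Max ((\<lambda>e. - lam * e + zeta S n (i_max S n) e *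
                (p_tp S n * beta S n -
                 max 0 (max (tVl S n lam (tau S n)) (tVl S n lam (s - 1))))) ` energies S)"

lemma tVu_eq: "tVu S n lam t = (\<Sum>s\<in>{tau S n + 1..t}. Tq s) + p_tp S n * Vu S n lam (tau S n)"
  unfolding tVu_def Vu_def Tq_def by simp

lemma tVu_ge: "i \<in> {1..nstates S n} \<Longrightarrow> VI S n lam (tau S n + Suc k) i \<le> tVu S n lam (tau S n + Suc k)"
proof (induction k arbitrary: i)
  case 0
  let ?Sm = "\<Sum>j\<in>{1..nstates S n}. trans S n i j * VI S n lam (tau S n) j"
  let ?M = "max 0 (max (tVl S n lam (tau S n)) (tVl S n lam (tau S n)))"
  have smu: "?Sm \<le> Vu S n lam (tau S n)" using 0 Vu_ge by (intro avg_le tr) auto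
  have psmu: "p_tp S n * ?Sm \<le> p_tp S n * Vu S n lam (tau S n)" using smu pp by (intro mult_left_mono) auto
  have sm0: "0 \<le> ?Sm" using 0 VI_nonneg by (intro avg_ge tr) auto
  have tv: "tVl S n lam (tau S n) \<le> p_tp S n * ?Sm" unfolding tVl_eq1
  proof (intro MaxI_le Epos)
    fix e assume "e \<in> Ep"
    then have "Wr S n lam e (zeta S n (i_min S n) e) (tau S n) \<le> ?Sm" using low 0 by (intro avg_ge tr) auto
    then show "p_tp S n * Wr S n lam e (zeta S n (i_min S n) e) (tau S n) \<le> p_tp S n * ?Sm"
      using pp by (intro mult_left_mono) auto
  qed
  have sml: "?M \<le> p_tp S n * ?Sm" using tv sm0 pp by auto
  have mb: "?M \<le> p_tp S n * beta S n" using pp tVl1_le by auto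
  have eq: "tVu S n lam (Suc (tau S n)) = Tq (Suc (tau S n)) + p_tp S n * Vu S n lam (tau S n)"
    unfolding tVu_eq by simp
  show ?case unfolding add_Suc_right add_0_right eq VI_Suc Tq_def
  proof (intro MaxI_le finE)
    show "energies S \<noteq> {}" using zE by auto
    fix e assume e: "e \<in> energies S"
    have "Bf S n lam e (zeta S n i e) (Suc (tau S n)) ?Sm = - lam * e + zeta S n i e * (p_tp S n * beta S n - p_tp S n * ?Sm) + p_tp S n * ?Sm"
      by (simp add: Bf_def algebra_simps)
    also have "\<dots> \<le> - lam * e + zeta S n (i_max S n) e * (p_tp S n * beta S n - ?M) + p_tp S n * Vu S n lam (tau S n)"
      using key_ineq[of "zeta S n i e" "zeta S n (i_max S n) e" ?M "p_tp S n * ?Sm" "p_tp S n * beta S n"] psmu sml mb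
        zb[OF 0 e] zmm[OF 0 e] by linarith
    also have "\<dots> \<le> Max ((\<lambda>e. - lam * e + zeta S n (i_max S n) e * (p_tp S n * beta S n - ?M)) ` energies S) + p_tp S n * Vu S n lam (tau S n)"
      using MaxI_ge[OF finE e, of "- lam * e + zeta S n (i_max S n) e * (p_tp S n * beta S n - ?M)"] by simp
    finally show "Bf S n lam e (zeta S n i e) (Suc (tau S n)) ?Sm \<le> Max ((\<lambda>e. - lam * e + zeta S n (i_max S n) e *
                (p_tp S n * beta S n - max 0 (max (tVl S n lam (tau S n)) (tVl S n lam (Suc (tau S n) - 1))))) ` energies S) + p_tp S n * Vu S n lam (tau S n)"
      by simp
  qed
next
  case (Suc k)
  let ?t = "tau S n + Suc k"
  let ?Sm = "\<Sum>j\<in>{1..nstates S n}. trans S n i j * VI S n lam ?t j"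
  let ?M = "max 0 (max (tVl S n lam (tau S n)) (tVl S n lam ?t))"
  have smu: "?Sm \<le> tVu S n lam ?t" using Suc by (intro avg_le tr) auto
  have "\<forall>j\<in>{1..nstates S n}. ?M \<le> VI S n lam ?t j"
  proof
    fix j assume j: "j \<in> {1..nstates S n}"
    show "?M \<le> VI S n lam ?t j"
      using VI_nonneg[OF j, of ?t] tVl1_le_VI[OF j, of k] tVl2_le_VI[OF j, of k] by (intro max.boundedI) auto
  qed
  then have sml: "?M \<le> ?Sm" using Suc.prems by (intro avg_ge tr) auto
  have mb: "?M \<le> p_tp S n * beta S n" using pp tVl1_le tVl2_le by auto
  have eq: "tVu S n lam (Suc ?t) = tVu S n lam ?t + Tq (Suc ?t)"
    unfolding tVu_eq by simp
  show ?case unfolding add_Suc_right[of _ "Suc k"] eq VI_Suc Tq_def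
  proof (intro MaxI_le finE)
    show "energies S \<noteq> {}" using zE by auto
    fix e assume e: "e \<in> energies S"
    have "Bf S n lam e (zeta S n i e) (Suc ?t) ?Sm = - lam * e + zeta S n i e * (p_tp S n * beta S n - ?Sm) + ?Sm"
      by (simp add: Bf_def algebra_simps)
    also have "\<dots> \<le> - lam * e + zeta S n (i_max S n) e * (p_tp S n * beta S n - ?M) + tVu S n lam ?t"
      using key_ineq[of "zeta S n i e" "zeta S n (i_max S n) e" ?M ?Sm "p_tp S n * beta S n"] smu sml mb
        zb[OF Suc.prems e] zmm[OF Suc.prems e] by linarith
    also have "\<dots> \<le> tVu S n lam ?t + Max ((\<lambda>e. - lam * e + zeta S n (i_max S n) e * (p_tp S n * beta S n - ?M)) ` energies S)"
      using MaxI_ge[OF finE e, of "- lam * e + zeta S n (i_max S n) e * (p_tp S n * beta S n - ?M)"] by simp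
    finally show "Bf S n lam e (zeta S n i e) (Suc ?t) ?Sm \<le> tVu S n lam ?t + Max ((\<lambda>e. - lam * e + zeta S n (i_max S n) e *
                (p_tp S n * beta S n - max 0 (max (tVl S n lam (tau S n)) (tVl S n lam (Suc ?t - 1))))) ` energies S)"
      by simp
  qed
qed

lemma P1: "max 0 (Vl S n lam (tau S n)) \<le> (\<Sum>i\<in>{1..nstates S n}. eta S n i * VI S n lam (tau S n) i)"
   "(\<Sum>i\<in>{1..nstates S n}. eta S n i * VI S n lam (tau S n) i) \<le> min (beta S n) (Vu S n lam (tau S n))"
proof -
  have "\<forall>j\<in>{1..nstates S n}. max 0 (Vl S n lam (tau S n)) \<le> VI S n lam (tau S n) j"
    using VI_nonneg Vl_le_VI by (auto intro!: max.boundedI)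
  then show "max 0 (Vl S n lam (tau S n)) \<le> (\<Sum>i\<in>{1..nstates S n}. eta S n i * VI S n lam (tau S n) i)"
    using et by (intro avg_ge) auto
  have "\<forall>j\<in>{1..nstates S n}. VI S n lam (tau S n) j \<le> min (beta S n) (Vu S n lam (tau S n))"
  proof
    fix j assume j: "j \<in> {1..nstates S n}"
    show "VI S n lam (tau S n) j \<le> min (beta S n) (Vu S n lam (tau S n))"
      using VI_cap[OF j, of "tau S n"] Vu_ge[OF _ j, of "tau S n"] by (intro min.boundedI) (auto simp: cap_def)
  qed
  then show "(\<Sum>i\<in>{1..nstates S n}. eta S n i * VI S n lam (tau S n) i) \<le> min (beta S n) (Vu S n lam (tau S n))"
    using et by (intro avg_le) auto
qed

lemma P2: "max 0 (max (tVl S n lam (tau S n)) (tVl S n lam (tau S n + delay S n))) \<le> (\<Sum>i\<in>{1..nstates S n}. eta S n i * VI S n lam (tau S n + delay S n) i)"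
   "(\<Sum>i\<in>{1..nstates S n}. eta S n i * VI S n lam (tau S n + delay S n) i) \<le> min (p_tp S n * beta S n) (tVu S n lam (tau S n + delay S n))"
proof -
  obtain k where k: "delay S n = Suc k" using pp(5) by (metis Suc_le_D One_nat_def)
  have "\<forall>j\<in>{1..nstates S n}. max 0 (max (tVl S n lam (tau S n)) (tVl S n lam (tau S n + Suc k))) \<le> VI S n lam (tau S n + Suc k) j"
  proof
    fix j assume j: "j \<in> {1..nstates S n}"
    show "max 0 (max (tVl S n lam (tau S n)) (tVl S n lam (tau S n + Suc k))) \<le> VI S n lam (tau S n + Suc k) j"
      using VI_nonneg[OF j, of "tau S n + Suc k"] tVl1_le_VI[OF j, of k] tVl2_le_VI[OF j, of k] by (intro max.boundedI) auto
  qed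
  then show "max 0 (max (tVl S n lam (tau S n)) (tVl S n lam (tau S n + delay S n))) \<le> (\<Sum>i\<in>{1..nstates S n}. eta S n i * VI S n lam (tau S n + delay S n) i)"
    unfolding k using et by (intro avg_ge) auto
  have "\<forall>j\<in>{1..nstates S n}. VI S n lam (tau S n + Suc k) j \<le> min (p_tp S n * beta S n) (tVu S n lam (tau S n + Suc k))"
  proof
    fix j assume j: "j \<in> {1..nstates S n}"
    show "VI S n lam (tau S n + Suc k) j \<le> min (p_tp S n * beta S n) (tVu S n lam (tau S n + Suc k))"
      using VI_cap[OF j, of "tau S n + Suc k"] tVu_ge[OF j, of k] by (intro min.boundedI) (auto simp: cap_def)
  qed
  then show "(\<Sum>i\<in>{1..nstates S n}. eta S n i * VI S n lam (tau S n + delay S n) i) \<le> min (p_tp S n * beta S n) (tVu S n lam (tau S n + delay S n))"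
    unfolding k using et by (intro avg_le) auto
qed

lemma coef: "0 \<le> a_tilde S n" "0 \<le> (a_max S - a_tilde S n) * q_fn S n"
proof -
  have d: "0 < p_tp S n - q_fn S n" using pp by auto
  have a1: "a_max S * q_fn S n \<le> arrival S n" using pp(10) pp(9) by (simp add: le_divide_eq mult.commute)
  have a2: "arrival S n \<le> a_max S * p_tp S n" using pp(11) pp(9) by (simp add: divide_le_eq mult.commute)
  show "0 \<le> a_tilde S n" unfolding a_tilde_def using a1 d by simp
  have "a_tilde S n \<le> a_max S" unfolding a_tilde_def using a2 d by (simp add: divide_le_eq algebra_simps)
  then show "0 \<le> (a_max S - a_tilde S n) * q_fn S n" using pp by simp
qed

end

lemma bounds:
  assumes V: "valid_system S" and lam: "0 \<le> lam"
  shows "gI_l S lam \<le> gI S lam" "gI S lam \<le> gI_u S lam" "g0_l S lam \<le> g0 S lam" "g0 S lam \<le> g0_u S lam"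
proof -
  show "gI_l S lam \<le> gI S lam" unfolding gI_l_def gI_def
    using P1(1)[OF V _ lam] P2(1)[OF V _ lam] coef[OF V _ lam]
    by (intro add_left_mono sum_mono add_mono mult_left_mono) auto
  show "gI S lam \<le> gI_u S lam" unfolding gI_u_def gI_def
    using P1(2)[OF V _ lam] P2(2)[OF V _ lam] coef[OF V _ lam]
    by (intro add_left_mono sum_mono add_mono mult_left_mono) auto
  show "g0_l S lam \<le> g0 S lam" unfolding g0_l_def g0_def
    using P1(1)[OF V _ lam] pp(8)[OF V _ lam]
    by (intro add_left_mono sum_mono add_mono mult_left_mono) auto
  show "g0 S lam \<le> g0_u S lam" unfolding g0_u_def g0_def
    using P1(2)[OF V _ lam] pp(8)[OF V _ lam]
    by (intro add_left_mono sum_mono add_mono mult_left_mono) auto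
qed

theorem theorem10:
  fixes S :: system and phiI phi0 lam0 lamI :: real
  assumes "valid_system S"
    and "\<exists>lam\<ge>0. gI S lam = phiI" and "\<forall>lam\<ge>0. phiI \<le> gI S lam"
    and "\<exists>lam\<ge>0. g0 S lam = phi0" and "\<forall>lam\<ge>0. phi0 \<le> g0 S lam"
    and "lam0 \<ge> 0" and "\<forall>lam\<ge>0. g0_l S lam0 \<le> g0_l S lam"
    and "lamI \<ge> 0" and "\<forall>lam\<ge>0. gI_l S lamI \<le> gI_l S lam"
  shows "gI_l S lamI - g0_u S lamI \<le> phiI - phi0 \<and> phiI - phi0 \<le> gI_u S lam0 - g0_l S lam0"
proof -
  obtain l1 where l1: "l1 \<ge> 0" "gI S l1 = phiI" using assms(2) by blast
  obtain l2 where l2: "l2 \<ge> 0" "g0 S l2 = phi0" using assms(4) by blast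
  have a: "gI_l S lamI \<le> phiI" using assms(9) l1 bounds(1)[OF assms(1) l1(1)] by force
  have b: "phi0 \<le> g0_u S lamI" using assms(5,8) bounds(4)[OF assms(1) assms(8)] by force
  have c: "phiI \<le> gI_u S lam0" using assms(3,6) bounds(2)[OF assms(1) assms(6)] by force
  have d: "g0_l S lam0 \<le> phi0" using assms(7) l2 bounds(3)[OF assms(1) l2(1)] by force
  show ?thesis using a b c d by linarith
qed

end
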